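(* Let $m\ge2$, $n\ge2$, and let $\mathcal{A}\in\mathbb{S}_{m,n}$ be a Hankel tensor with generating vector $v=(v_0,\dots,v_{(n-1)m})^T$. (i) If $v_0=v_{(n-1)m}=0$, then $\mathcal{A}$ is completely positive if and only if $\mathcal{A}$ is the zero tensor. (ii) If $n\ge3$, $\mathcal{A}$ is completely positive, and $v_{(i-1)m}=0$ for some $2\le i\le n-1$, then $v_0\ge0$, $v_{(n-1)m}\ge0$ and $\mathcal{A}=v_0(e^{(1)})^m+v_{(n-1)m}(e^{(n)})^m$. (iii) If $v_0=0$ and $v_j\ne0$ for some $j\in[m-1]$, then $\mathcal{A}$ is not completely positive.
   Context: $\mathcal{A}=(a_{i_1\ldots i_m})\in\mathbb{S}_{m,n}$ is a Hankel tensor with generating vector $v$ if $a_{i_1\ldots i_m}=v_{i_1+\dots+i_m-m}$ for all $i_1,\dots,i_m\in[n]$. $e^{(i)}$ is the $i$th standard basis vector of $\mathbb{R}^n$; $(u^m)_{i_1\ldots i_m}=u_{i_1}\cdots u_{i_m}$. A tensor $\mathcal{A}\in\mathbb{S}_{m,n}$ is completely positive if $\mathcal{A}=\sum_{k=1}^r(u^{(k)})^m$ for some $r\ge1$ and $u^{(k)}\in\mathbb{R}^n_+$. *)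

theory Defs
  imports Complex_Main
begin

text \<open>Indices are 0-based: an index tuple (i_1,...,i_m) with i_k in [n]
  is represented by a list of length m with entries in {0..<n} (entry i-1 for paper index i).
  A real tensor of order m and dimension n is a function on such lists
  (values outside valid index lists are irrelevant).\<close>

definition valid_idx :: "nat \<Rightarrow> nat \<Rightarrow> nat list \<Rightarrow> bool" where
  "valid_idx m n is \<longleftrightarrow> length is = m \<and> (\<forall>j\<in>set is. j < n)"

text \<open>Hankel tensor with generating vector v: a_{i_1..i_m} = v_{i_1+...+i_m-m} (1-based),
  i.e. the sum of the 0-based indices.\<close>
definition hankel_tensor :: "nat \<Rightarrow> nat \<Rightarrow> (nat list \<Rightarrow> real) \<Rightarrow> (nat \<Rightarrow> real) \<Rightarrow> bool" where
  "hankel_tensor m n A v \<longleftrightarrow> (\<forall>is. valid_idx m n is \<longrightarrow> A is = v (sum_list is))"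

definition tpow :: "(nat \<Rightarrow> real) \<Rightarrow> nat list \<Rightarrow> real" where
  "tpow u is = prod_list (map u is)"

definition std_basis :: "nat \<Rightarrow> nat \<Rightarrow> real" where
  "std_basis i = (\<lambda>j. if j = i then 1 else 0)"

definition completely_positive :: "nat \<Rightarrow> nat \<Rightarrow> (nat list \<Rightarrow> real) \<Rightarrow> bool" where
  "completely_positive m n A \<longleftrightarrow>
     (\<exists>r::nat. r \<ge> 1 \<and> (\<exists>u :: nat \<Rightarrow> nat \<Rightarrow> real.
        (\<forall>k<r. \<forall>i<n. u k i \<ge> 0) \<and>
        (\<forall>is. valid_idx m n is \<longrightarrow> A is = (\<Sum>k<r. tpow (u k) is))))"

definition zero_tensor :: "nat \<Rightarrow> nat \<Rightarrow> (nat list \<Rightarrow> real) \<Rightarrow> bool" where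
  "zero_tensor m n A \<longleftrightarrow> (\<forall>is. valid_idx m n is \<longrightarrow> A is = 0)"

end

theory Submission
  imports Defs
begin

lemma sum_remove1: "(x::nat) \<in> set xs \<Longrightarrow> sum_list xs = x + sum_list (remove1 x xs)"
  by (induction xs) auto

lemma sum_bound: "(\<forall>x\<in>set xs. x < (n::nat)) \<Longrightarrow> sum_list xs \<le> (n - 1) * length xs"
proof (induction xs)
  case Nil then show ?case by simp
next
  case (Cons a xs)
  then have "a \<le> n - 1" by auto
  then have "a + sum_list xs \<le> (n - 1) + (n - 1) * length xs"
    using Cons by (intro add_mono) auto
  then show ?case by simp
qed

lemma repr: "(n::nat) \<ge> 1 \<Longrightarrow> s \<le> (n - 1) * l \<Longrightarrow>
   \<exists>xs. length xs = l \<and> (\<forall>x\<in>set xs. x < n) \<and> sum_list xs = s"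
proof (induction l arbitrary: s)
  case 0 then show ?case by simp
next
  case (Suc l)
  define x where "x = min s (n - 1)"
  have "s - x \<le> (n - 1) * l" using Suc.prems by (auto simp: x_def min_def algebra_simps)
  then obtain xs where "length xs = l" "\<forall>x\<in>set xs. x < n" "sum_list xs = s - x"
    using Suc by blast
  then show ?case using Suc.prems
    by (intro exI[of _ "x # xs"]) (auto simp: x_def min_def)
qed

lemma diag_zero:
  assumes nn: "\<forall>k<(r::nat). \<forall>i<n. u k i \<ge> (0::real)"
    and rep: "\<forall>is. valid_idx m n is \<longrightarrow> v (sum_list is) = (\<Sum>k<r. tpow (u k) is)"
    and m: "m \<ge> 1" and j: "j < n" and z: "v (j * m) = 0"
  shows "\<forall>k<r. u k j = 0"
proof -
  have "valid_idx m n (replicate m j)" using j by (simp add: valid_idx_def)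
  then have "v (sum_list (replicate m j)) = (\<Sum>k<r. tpow (u k) (replicate m j))"
    using rep by blast
  then have "v (j * m) = (\<Sum>k<r. u k j ^ m)"
    by (simp add: sum_list_replicate tpow_def mult.commute)
  then have "(\<Sum>k<r. u k j ^ m) = 0" using z by simp
  moreover have "\<forall>k\<in>{..<r}. 0 \<le> u k j ^ m" using nn j by auto
  ultimately have "\<forall>k\<in>{..<r}. u k j ^ m = 0"
    using sum_nonneg_eq_0_iff[OF finite_lessThan, of r "\<lambda>k. u k j ^ m"] by blast
  then show ?thesis using m by auto
qed

lemma diag_nonneg:
  assumes nn: "\<forall>k<(r::nat). \<forall>i<n. u k i \<ge> (0::real)"
    and rep: "\<forall>is. valid_idx m n is \<longrightarrow> v (sum_list is) = (\<Sum>k<r. tpow (u k) is)"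
    and j: "j < n"
  shows "v (j * m) \<ge> 0"
proof -
  have "valid_idx m n (replicate m j)" using j by (simp add: valid_idx_def)
  then have "v (sum_list (replicate m j)) = (\<Sum>k<r. tpow (u k) (replicate m j))"
    using rep by blast
  then have "v (j * m) = (\<Sum>k<r. u k j ^ m)"
    by (simp add: sum_list_replicate tpow_def mult.commute)
  moreover have "\<forall>k\<in>{..<r}. 0 \<le> u k j ^ m" using nn j by auto
  moreover have "0 \<le> (\<Sum>k<r. u k j ^ m)" by (rule sum_nonneg) (use nn j in auto)
  ultimately show ?thesis by simp
qed

lemma factor_zero:
  assumes rep: "\<forall>is. valid_idx m n is \<longrightarrow> v (sum_list is) = (\<Sum>k<(r::nat). tpow (u k) is)"
    and vi: "valid_idx m n is" and x: "x \<in> set is" and z: "\<forall>k<r. u k x = (0::real)"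
  shows "v (sum_list is) = 0"
proof -
  have "\<forall>k<r. tpow (u k) is = 0"
    using x z by (auto simp: tpow_def prod_list_zero_iff)
  then show ?thesis using rep vi by simp
qed

theorem mainTheorem6:
  fixes m n :: nat and A :: "nat list \<Rightarrow> real" and v :: "nat \<Rightarrow> real"
  assumes "m \<ge> 2" and "n \<ge> 2" and "hankel_tensor m n A v"
  shows "(v 0 = 0 \<and> v ((n - 1) * m) = 0 \<longrightarrow>
            (completely_positive m n A \<longleftrightarrow> zero_tensor m n A))
       \<and> (n \<ge> 3 \<and> completely_positive m n A \<and>
            (\<exists>i. 1 \<le> i \<and> i \<le> n - 2 \<and> v (i * m) = 0) \<longrightarrow>
            v 0 \<ge> 0 \<and> v ((n - 1) * m) \<ge> 0 \<and>
            (\<forall>is. valid_idx m n is \<longrightarrow>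
               A is = v 0 * tpow (std_basis 0) is + v ((n - 1) * m) * tpow (std_basis (n - 1)) is))
       \<and> (v 0 = 0 \<and> (\<exists>j. 1 \<le> j \<and> j \<le> m - 1 \<and> v j \<noteq> 0) \<longrightarrow>
            \<not> completely_positive m n A)"
proof -
  have hk: "\<And>is. valid_idx m n is \<Longrightarrow> A is = v (sum_list is)"
    using assms(3) by (simp add: hankel_tensor_def)
  have getrep: "\<exists>(r::nat) u. (\<forall>k<r. \<forall>i<n. u k i \<ge> (0::real)) \<and>
      (\<forall>is. valid_idx m n is \<longrightarrow> v (sum_list is) = (\<Sum>k<r. tpow (u k) is))"
    if cpA: "completely_positive m n A"
  proof -
    obtain r :: nat and u where "\<forall>k<r. \<forall>i<n. u k i \<ge> (0::real)"
       "\<forall>is. valid_idx m n is \<longrightarrow> A is = (\<Sum>k<r. tpow (u k) is)"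
      using cpA unfolding completely_positive_def by blast
    then show ?thesis using hk by (intro exI[of _ r] exI[of _ u]) auto
  qed
  have P1: "v 0 = 0 \<and> v ((n - 1) * m) = 0 \<longrightarrow>
            (completely_positive m n A \<longleftrightarrow> zero_tensor m n A)"
  proof (intro impI iffI)
    assume h: "v 0 = 0 \<and> v ((n - 1) * m) = 0" and cp: "completely_positive m n A"
    obtain r :: nat and u where nn: "\<forall>k<r. \<forall>i<n. u k i \<ge> (0::real)"
      and rep: "\<forall>is. valid_idx m n is \<longrightarrow> v (sum_list is) = (\<Sum>k<r. tpow (u k) is)"
      using getrep[OF cp] by blast
    have z0: "\<forall>k<r. u k 0 = 0"
      using diag_zero[OF nn rep, of 0] h assms by simp
    have zn: "\<forall>k<r. u k (n - 1) = 0"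
      using diag_zero[OF nn rep, of "n - 1"] h assms by simp
    show "zero_tensor m n A" unfolding zero_tensor_def
    proof (intro allI impI)
      fix ixs assume vi: "valid_idx m n ixs"
      define s where "s = sum_list ixs"
      have sb: "s \<le> (n - 1) * m" using sum_bound[of "ixs" n] vi
        by (simp add: valid_idx_def s_def)
      have "v s = 0"
      proof (cases "s \<le> (n - 1) * (m - 1)")
        case True
        then obtain xs where xs: "length xs = m - 1" "\<forall>x\<in>set xs. x < n" "sum_list xs = s"
          using repr[of n s "m - 1"] assms by auto
        have "valid_idx m n (0 # xs)" using xs assms by (auto simp: valid_idx_def)
        from factor_zero[OF rep this _ z0] xs show ?thesis by simp
      next
        case False
        then have "s - (n - 1) \<le> (n - 1) * (m - 1)" using sb assms
          by (auto simp: algebra_simps)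
        then obtain xs where xs: "length xs = m - 1" "\<forall>x\<in>set xs. x < n" "sum_list xs = s - (n - 1)"
          using repr[of n "s - (n - 1)" "m - 1"] assms by auto
        have "valid_idx m n ((n - 1) # xs)" using xs assms by (auto simp: valid_idx_def)
        have "(n - 1) * 1 \<le> (n - 1) * (m - 1)" using assms by (intro mult_le_mono2) simp
        then have "n - 1 \<le> (n - 1) * (m - 1)" by (simp only: mult_1_right)
        then have "n - 1 \<le> s" using False by linarith
        from factor_zero[OF rep \<open>valid_idx m n ((n - 1) # xs)\<close> _ zn] xs this show ?thesis by simp
      qed
      then show "A ixs = 0" using hk vi s_def by simp
    qed
  next
    assume z: "zero_tensor m n A"
    show "completely_positive m n A" unfolding completely_positive_def
    proof (intro exI conjI)
      show "(1::nat) \<ge> 1" by simp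
      show "\<forall>k<1. \<forall>i<n. (\<lambda>k i. 0::real) k i \<ge> 0" by simp
      show "\<forall>ixs. valid_idx m n ixs \<longrightarrow> A ixs = (\<Sum>k<1. tpow ((\<lambda>k i. 0::real) k) ixs)"
      proof (intro allI impI)
        fix ixs assume vi: "valid_idx m n ixs"
        then have "ixs \<noteq> []" using assms by (auto simp: valid_idx_def)
        then have "tpow (\<lambda>i. 0) ixs = 0" by (cases "ixs") (auto simp: tpow_def)
        then show "A ixs = (\<Sum>k<1. tpow ((\<lambda>k i. 0::real) k) ixs)"
          using z vi by (simp add: zero_tensor_def)
      qed
    qed
  qed
  have P3: "v 0 = 0 \<and> (\<exists>j. 1 \<le> j \<and> j \<le> m - 1 \<and> v j \<noteq> 0) \<longrightarrow>
            \<not> completely_positive m n A"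
  proof (intro impI notI)
    assume h: "v 0 = 0 \<and> (\<exists>j. 1 \<le> j \<and> j \<le> m - 1 \<and> v j \<noteq> 0)"
      and cp: "completely_positive m n A"
    obtain r :: nat and u where nn: "\<forall>k<r. \<forall>i<n. u k i \<ge> (0::real)"
      and rep: "\<forall>is. valid_idx m n is \<longrightarrow> v (sum_list is) = (\<Sum>k<r. tpow (u k) is)"
      using getrep[OF cp] by blast
    have z0: "\<forall>k<r. u k 0 = 0"
      using diag_zero[OF nn rep, of 0] h assms by simp
    obtain j where j: "1 \<le> j" "j \<le> m - 1" "v j \<noteq> 0" using h by blast
    define t where "t = replicate j (1::nat) @ replicate (m - j) 0"
    have "valid_idx m n t" using j assms by (auto simp: t_def valid_idx_def)
    moreover have "0 \<in> set t" using j by (auto simp: t_def)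
    ultimately have "v (sum_list t) = 0" using factor_zero[OF rep _ _ z0] by blast
    moreover have "sum_list t = j" by (simp add: t_def sum_list_replicate)
    ultimately show False using j by simp
  qed
  have P2: "n \<ge> 3 \<and> completely_positive m n A \<and>
            (\<exists>i. 1 \<le> i \<and> i \<le> n - 2 \<and> v (i * m) = 0) \<longrightarrow>
            v 0 \<ge> 0 \<and> v ((n - 1) * m) \<ge> 0 \<and>
            (\<forall>is. valid_idx m n is \<longrightarrow>
               A is = v 0 * tpow (std_basis 0) is + v ((n - 1) * m) * tpow (std_basis (n - 1)) is)"
  proof (intro impI)
    assume h: "n \<ge> 3 \<and> completely_positive m n A \<and>
            (\<exists>i. 1 \<le> i \<and> i \<le> n - 2 \<and> v (i * m) = 0)"
    then have n3: "n \<ge> 3" and cp: "completely_positive m n A" by auto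
    obtain i0 where i0: "1 \<le> i0" "i0 \<le> n - 2" "v (i0 * m) = 0" using h by blast
    obtain r :: nat and u where nn: "\<forall>k<r. \<forall>i<n. u k i \<ge> (0::real)"
      and rep: "\<forall>is. valid_idx m n is \<longrightarrow> v (sum_list is) = (\<Sum>k<r. tpow (u k) is)"
      using getrep[OF cp] by blast
    define P where "P j = (\<forall>k<r. u k j = 0)" for j
    have Pi0: "P i0" unfolding P_def using diag_zero[OF nn rep, of i0] i0 assms by simp
    have down: "P (i - 1)" if hP: "P i" and hi: "2 \<le> i" and hn: "i < n" for i
    proof -
      obtain a where a: "i = 2 + a" using le_Suc_ex[OF hi] by blast
      obtain b where b: "m = 2 + b" using le_Suc_ex[OF assms(1)] by blast
      define t where "t = i # (i - 2) # replicate (m - 2) (i - 1)"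
      have vt: "valid_idx m n t" using hn b by (auto simp: t_def valid_idx_def)
      have "i \<in> set t" by (simp add: t_def)
      from factor_zero[OF rep vt this] hP have "v (sum_list t) = 0" by (simp add: P_def)
      moreover have "sum_list t = (i - 1) * m"
        unfolding t_def a b by (simp add: sum_list_replicate algebra_simps)
      ultimately have "v ((i - 1) * m) = 0" by simp
      then show ?thesis unfolding P_def
        using diag_zero[OF nn rep, of "i - 1"] hn assms(1) by simp
    qed
    have up: "P (i + 1)" if hP: "P i" and hn: "i + 2 < n" for i
    proof -
      obtain b where b: "m = 2 + b" using le_Suc_ex[OF assms(1)] by blast
      define t where "t = i # (i + 2) # replicate (m - 2) (i + 1)"
      have vt: "valid_idx m n t" using hn b by (auto simp: t_def valid_idx_def)
      have "i \<in> set t" by (simp add: t_def)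
      from factor_zero[OF rep vt this] hP have "v (sum_list t) = 0" by (simp add: P_def)
      moreover have "sum_list t = (i + 1) * m"
        unfolding t_def b by (simp add: sum_list_replicate algebra_simps)
      ultimately have "v ((i + 1) * m) = 0" by simp
      then show ?thesis unfolding P_def
        using diag_zero[OF nn rep, of "i + 1"] hn assms(1) by simp
    qed
    have D: "d < i0 \<longrightarrow> P (i0 - d)" for d
    proof (induction d)
      case 0 then show ?case using Pi0 by simp
    next
      case (Suc d)
      show ?case
      proof
        assume sd: "Suc d < i0"
        have h1: "P (i0 - d)" using Suc.IH sd by simp
        have h2: "2 \<le> i0 - d" using sd by linarith
        have h3: "i0 - d < n" using i0(2) n3 by linarith
        from down[OF h1 h2 h3] have "P (i0 - d - 1)" .
        then show "P (i0 - Suc d)" by simp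
      qed
    qed
    have U: "i0 + d \<le> n - 2 \<longrightarrow> P (i0 + d)" for d
    proof (induction d)
      case 0 then show ?case using Pi0 by simp
    next
      case (Suc d)
      show ?case
      proof
        assume a: "i0 + Suc d \<le> n - 2"
        have h1: "P (i0 + d)" using Suc.IH a by simp
        have h2: "i0 + d + 2 < n" using a n3 by linarith
        from up[OF h1 h2] have "P (i0 + d + 1)" .
        then show "P (i0 + Suc d)" by simp
      qed
    qed
    have mid: "P j" if "1 \<le> j" "j \<le> n - 2" for j
    proof (cases "j \<le> i0")
      case True
      have "i0 - j < i0" using True that by linarith
      then have "P (i0 - (i0 - j))" using D[of "i0 - j"] by blast
      moreover have "i0 - (i0 - j) = j" using True by simp
      ultimately show ?thesis by simp
    next
      case False
      have "i0 + (j - i0) \<le> n - 2" using False that by linarith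
      then have "P (i0 + (j - i0))" using U[of "j - i0"] by blast
      moreover have "i0 + (j - i0) = j" using False by simp
      ultimately show ?thesis by simp
    qed
    have v0: "v 0 \<ge> 0" using diag_nonneg[OF nn rep, of 0] assms by simp
    have vn: "v ((n - 1) * m) \<ge> 0" using diag_nonneg[OF nn rep, of "n - 1"] assms by simp
    have main: "A ixs = v 0 * tpow (std_basis 0) ixs + v ((n - 1) * m) * tpow (std_basis (n - 1)) ixs"
      if vi: "valid_idx m n ixs" for "ixs"
    proof -
      have len: "length ixs = m" and lt: "\<forall>x\<in>set ixs. x < n" using vi by (auto simp: valid_idx_def)
      have ne: "ixs \<noteq> []" using len assms by auto
      have tz: "tpow (std_basis a) ixs = 0" if "x \<in> set ixs" "x \<noteq> a" for a x
        using that by (auto simp: tpow_def std_basis_def prod_list_zero_iff)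
      show ?thesis
      proof (cases "set ixs \<subseteq> {0}")
        case True
        have rep0: "ixs = replicate m 0" using len True
          by (intro replicate_eqI) auto
        have hd0: "hd ixs \<in> set ixs" using ne by simp
        have hd1: "hd ixs = 0" using True hd0 by auto
        have e1: "tpow (std_basis (n - 1)) ixs = 0"
          using tz[OF hd0, of "n - 1"] hd1 assms by simp
        have e0: "tpow (std_basis 0) ixs = 1" unfolding rep0
          by (simp add: tpow_def std_basis_def)
        have s0: "sum_list ixs = 0" unfolding rep0 by (simp add: sum_list_replicate)
        have "A ixs = v 0" using hk[OF vi] s0 by simp
        then show ?thesis using e0 e1 by simp
      next
        case F0: False
        then obtain x where x: "x \<in> set ixs" "x \<noteq> 0" by auto
        show ?thesis
        proof (cases "set ixs \<subseteq> {n - 1}")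
          case True
          then have repn: "ixs = replicate m (n - 1)" using len
            by (intro replicate_eqI) auto
          have "tpow (std_basis 0) ixs = 0"
            using tz[of x 0] x by simp
          moreover have "tpow (std_basis (n - 1)) ixs = 1" unfolding repn
            by (simp add: tpow_def std_basis_def)
          moreover have "sum_list ixs = (n - 1) * m" unfolding repn
            by (simp add: sum_list_replicate mult.commute)
          moreover have "A ixs = v ((n - 1) * m)" using hk[OF vi] \<open>sum_list ixs = (n - 1) * m\<close> by simp
          ultimately show ?thesis by simp
        next
          case False
          then obtain y where y: "y \<in> set ixs" "y \<noteq> n - 1" by auto
          have t0: "tpow (std_basis 0) ixs = 0" using tz[of x 0] x by simp
          have t1: "tpow (std_basis (n - 1)) ixs = 0" using tz[of y "n - 1"] y by simp
          have "v (sum_list ixs) = 0"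
          proof (cases "x \<noteq> n - 1")
            case True
            have "x < n" using x lt by blast
            then have "1 \<le> x" "x \<le> n - 2" using True x(2) by linarith+
            then have "P x" by (rule mid)
            then show ?thesis using factor_zero[OF rep vi x(1)] by (simp add: P_def)
          next
            case xn: False
            show ?thesis
            proof (cases "y \<noteq> 0")
              case True
              have "y < n" using y lt by blast
              then have "1 \<le> y" "y \<le> n - 2" using True y(2) by linarith+
              then have "P y" by (rule mid)
              then show ?thesis using factor_zero[OF rep vi y(1)] by (simp add: P_def)
            next
              case False
              then have y0: "y = 0" by simp
              define r1 where "r1 = remove1 (n - 1) ixs"
              define r2 where "r2 = remove1 0 r1"
              define t where "t = (n - 2) # 1 # r2"
              have s1: "sum_list ixs = (n - 1) + sum_list r1"
                using sum_remove1[of "n - 1" "ixs"] x xn by (simp add: r1_def)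
              have "0 \<in> set r1" using y y0 assms by (simp add: r1_def)
              then have s2: "sum_list r1 = sum_list r2" using sum_remove1[of 0 r1] by (simp add: r2_def)
              have "length r1 = m - 1" using x xn len by (simp add: r1_def length_remove1)
              then have "length r2 = m - 2" using \<open>0 \<in> set r1\<close> by (simp add: r2_def length_remove1)
              moreover have "set r2 \<subseteq> set ixs"
              proof -
                have "set r2 \<subseteq> set r1" unfolding r2_def by (rule set_remove1_subset)
                moreover have "set r1 \<subseteq> set ixs" unfolding r1_def by (rule set_remove1_subset)
                ultimately show ?thesis by (rule order.trans)
              qed
              ultimately have vt: "valid_idx m n t" using lt assms n3
                by (auto simp: t_def valid_idx_def)
              have st: "sum_list t = sum_list ixs" using s1 s2 n3 by (simp add: t_def)
              have "P 1" using n3 by (intro mid) auto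
              have "1 \<in> set t" by (simp add: t_def)
              from factor_zero[OF rep vt this] \<open>P 1\<close> have "v (sum_list t) = 0"
                by (simp add: P_def)
              then show ?thesis using st by simp
            qed
          qed
          then show ?thesis using hk vi t0 t1 by simp
        qed
      qed
    qed
    show "v 0 \<ge> 0 \<and> v ((n - 1) * m) \<ge> 0 \<and>
            (\<forall>is. valid_idx m n is \<longrightarrow>
               A is = v 0 * tpow (std_basis 0) is + v ((n - 1) * m) * tpow (std_basis (n - 1)) is)"
      using v0 vn main by blast
  qed
  show ?thesis using P1 P2 P3 by blast
qed

end
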